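(* Let $d\ge1$ and equip $\mathbb{R}^d$ with the $\ell^\infty$-norm $|(\xi^1,\dots,\xi^d)|_\infty=\max_i|\xi^i|$. Let $C_d$ be the smallest real constant such that for every $N\ge1$, every $(\xi_1,\dots,\xi_N)\in([0,1]^d)^N$ and every continuous $f:[0,1]^d\to\mathbb{R}$, $$\Big|\int_{[0,1]^d}f(u)\,du-\frac1N\sum_{i=1}^Nf(\xi_i)\Big|\le C_d\,w\big(f,D^*_N(\xi_1,\dots,\xi_N)^{\frac1d}\big)$$ (this constant is finite, with $C_1=1$ and $C_d\in[1,4]$ for $d\ge2$). Then: (a) for every $N\ge1$ and every $(\xi_1,\dots,\xi_N)\in([0,1]^d)^N$, $$e_1\big(\{\xi_1,\dots,\xi_N\},U([0,1]^d)\big)\le C_d\,D^*_N(\xi_1,\dots,\xi_N)^{\frac1d};$$ (b) in particular, when $d=1$, $e_1\big(\{\xi_1,\dots,\xi_N\},U([0,1])\big)\le D^*_N(\xi_1,\dots,\xi_N)$.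
   Context: $U([0,1]^d)$ is the uniform distribution on $[0,1]^d$ and, for $U\sim U([0,1]^d)$ and $\Gamma\subset\mathbb{R}^d$, $e_1(\Gamma,U([0,1]^d))=\mathbb{E}\min_{a\in\Gamma}|U-a|_\infty$. The star discrepancy is $D^*_N(\xi_1,\dots,\xi_N)=\sup_{u\in[0,1]^d}\big|\frac1N\sum_{i=1}^N\mathbf{1}_{\{\xi_i\in[\![0,u]\!]\}}-\lambda_d([\![0,u]\!])\big|$ where $[\![0,u]\!]=\prod_{\ell=1}^d[0,u^\ell]$. The uniform continuity modulus is $w(f,\delta)=\sup\{|f(\xi)-f(\xi')|:\xi,\xi'\in[0,1]^d,\ |\xi-\xi'|_\infty\le\delta\}$. *)

theory Defs
  imports "HOL-Analysis.Analysis"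
begin

text \<open>Points of R^d are vectors of type real^'n, d = CARD('n).\<close>

definition unit_cube :: "(real^'n) set" where
  "unit_cube = cbox 0 One"

definition linf_norm :: "real^'n \<Rightarrow> real" where
  "linf_norm x = Max (range (\<lambda>i. \<bar>x $ i\<bar>))"

definition star_discrepancy :: "nat \<Rightarrow> (nat \<Rightarrow> real^'n) \<Rightarrow> real" where
  "star_discrepancy N xi =
     (SUP u\<in>unit_cube. \<bar>real (card {i\<in>{..<N}. xi i \<in> cbox 0 u}) / real N
                          - measure lborel (cbox 0 u)\<bar>)"

definition modulus :: "(real^'n \<Rightarrow> real) \<Rightarrow> real \<Rightarrow> real" where
  "modulus f \<delta> = (SUP p\<in>{(x, y). x \<in> unit_cube \<and> y \<in> unit_cube \<and> linf_norm (x - y) \<le> \<delta>}.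
                      \<bar>f (fst p) - f (snd p)\<bar>)"

text \<open>L^1 quantization error of the uniform distribution on [0,1]^d (Lebesgue measure of
  the cube is 1, so the expectation is the integral over the cube).\<close>
definition e1_unif :: "(real^'n) set \<Rightarrow> real" where
  "e1_unif \<Gamma> = integral unit_cube (\<lambda>u. Inf ((\<lambda>a. linf_norm (u - a)) ` \<Gamma>))"

definition Cd :: "'n::finite itself \<Rightarrow> real" where
  "Cd _ = Inf {C. \<forall>N (xi :: nat \<Rightarrow> real^'n) f. N \<ge> 1 \<longrightarrow> (\<forall>i<N. xi i \<in> unit_cube) \<longrightarrow>
              continuous_on unit_cube f \<longrightarrow>
              \<bar>integral unit_cube f - (1 / real N) * (\<Sum>i<N. f (xi i))\<bar>
                \<le> C * modulus f (star_discrepancy N xi powr (1 / real CARD('n)))}"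

end

theory Submission
  imports Defs
begin


definition KS :: "nat \<Rightarrow> 'n set \<Rightarrow> ('n \<Rightarrow> nat) set" where
  "KS m S = {k. \<forall>i. (i \<in> S \<longrightarrow> k i < m) \<and> (i \<notin> S \<longrightarrow> k i = 0)}"

lemma finite_KS: "finite (KS m (S::'n::finite set))"
proof -
  have "KS m S \<subseteq> Pi\<^sub>E UNIV (\<lambda>_. {..m})" by (auto simp: KS_def PiE_def extensional_def Pi_def) (metis less_imp_le_nat zero_le)
  then show ?thesis by (rule finite_subset) (simp add: finite_PiE)
qed

lemma one_d:
  fixes g \<sigma> :: "nat \<Rightarrow> real"
  shows "(\<Sum>t<Suc n. (g t - g 0) * \<sigma> t) = (g n - g 0) * (\<Sum>s\<le>n. \<sigma> s) - (\<Sum>t<n. (g (Suc t) - g t) * (\<Sum>s\<le>t. \<sigma> s))"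
proof (induction n)
  case 0 then show ?case by simp
next
  case (Suc n)
  then show ?case by (simp add: algebra_simps)
qed

lemma g_bound:
  fixes g :: "nat \<Rightarrow> real"
  assumes "\<And>t. Suc t < m \<Longrightarrow> \<bar>g (Suc t) - g t\<bar> \<le> \<omega>" "n < m"
  shows "\<bar>g n - g 0\<bar> \<le> n * \<omega>"
  using assms(2)
proof (induction n)
  case 0 then show ?case by simp
next
  case (Suc n)
  have "\<bar>g (Suc n) - g 0\<bar> \<le> \<bar>g (Suc n) - g n\<bar> + \<bar>g n - g 0\<bar>" by linarith
  also have "\<dots> \<le> \<omega> + n * \<omega>" using Suc assms(1) by (intro add_mono) auto
  finally show ?case by (simp add: algebra_simps)
qed

lemma one_d_bound:
  fixes g \<sigma> :: "nat \<Rightarrow> real"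
  assumes "\<And>t. Suc t < m \<Longrightarrow> \<bar>g (Suc t) - g t\<bar> \<le> \<omega>"
    and "\<And>t. t < m \<Longrightarrow> \<bar>\<Sum>s\<le>t. \<sigma> s\<bar> \<le> D" and "m \<ge> 1" "\<omega> \<ge> 0" "D \<ge> 0"
  shows "\<bar>(\<Sum>t<m. g t * \<sigma> t) - g 0 * (\<Sum>t<m. \<sigma> t)\<bar> \<le> 2 * real m * \<omega> * D"
proof -
  obtain n where n: "m = Suc n" using assms(3) by (cases m) auto
  have eq: "(\<Sum>t<m. g t * \<sigma> t) - g 0 * (\<Sum>t<m. \<sigma> t) = (\<Sum>t<Suc n. (g t - g 0) * \<sigma> t)"
    by (simp add: n sum_distrib_left sum_subtractf algebra_simps)
  have b1: "\<bar>(g n - g 0) * (\<Sum>s\<le>n. \<sigma> s)\<bar> \<le> (n * \<omega>) * D"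
    unfolding abs_mult using g_bound[of m g \<omega> n, OF assms(1)] assms(2)[of n] n assms(4,5)
    by (intro mult_mono) auto
  have b2: "\<bar>\<Sum>t<n. (g (Suc t) - g t) * (\<Sum>s\<le>t. \<sigma> s)\<bar> \<le> (\<Sum>t<n. \<omega> * D)"
    by (rule order_trans[OF sum_abs], rule sum_mono) 
       (unfold abs_mult, use assms n in \<open>intro mult_mono, auto\<close>)
  have "\<bar>(\<Sum>t<Suc n. (g t - g 0) * \<sigma> t)\<bar> \<le> n * \<omega> * D + n * \<omega> * D"
    unfolding one_d using b1 b2 abs_triangle_ineq4[of "(g n - g 0) * (\<Sum>s\<le>n. \<sigma> s)" "\<Sum>t<n. (g (Suc t) - g t) * (\<Sum>s\<le>t. \<sigma> s)"]
    by (simp only: sum_constant) (simp add: algebra_simps)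
  also have "\<dots> \<le> 2 * real m * \<omega> * D" using n assms by (simp add: algebra_simps mult_nonneg_nonneg)
  finally show ?thesis using eq by simp
qed

lemma KS_empty: "KS m {} = {\<lambda>_. 0}"
  by (auto simp: KS_def)

lemma KS_zero: "m \<ge> 1 \<Longrightarrow> (\<lambda>_. 0) \<in> KS m S"
  by (auto simp: KS_def)

lemma KS_upd: "a \<notin> S \<Longrightarrow> j \<in> KS m S \<Longrightarrow> t < m \<Longrightarrow> j(a := t) \<in> KS m (insert a S)"
  by (auto simp: KS_def)

lemma KS_insert_img: "a \<notin> S \<Longrightarrow> KS m (insert a S) = (\<lambda>(j,t). j(a := t)) ` (KS m S \<times> {..<m})"
proof safe
  fix k assume a: "a \<notin> S" and k: "k \<in> KS m (insert a S)"
  have "k(a := 0) \<in> KS m S" "k a < m" using k a by (auto simp: KS_def)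
  moreover have "k = (k(a:=0))(a := k a)" by simp
  ultimately show "k \<in> (\<lambda>(j,t). j(a := t)) ` (KS m S \<times> {..<m})"
    by (intro image_eqI[where x="(k(a:=0), k a)"]) auto
qed (auto simp: KS_def)

lemma KS_inj: "a \<notin> S \<Longrightarrow> inj_on (\<lambda>(j,t). j(a := t)) (KS m S \<times> UNIV)"
proof (rule inj_onI, clarify)
  fix j t j' t' assume a: "a \<notin> S" and j: "j \<in> KS m S" and j': "j' \<in> KS m S" and eq: "j(a := t) = j'(a := t')"
  have "j a = 0" "j' a = 0" using a j j' by (auto simp: KS_def)
  then show "j = j' \<and> t = t'" using eq by (metis fun_upd_apply fun_upd_triv fun_upd_upd)
qed

lemma sum_KS_img:
  assumes "a \<notin> S" "A \<subseteq> KS m S" "finite A" "finite B"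
  shows "sum \<phi> ((\<lambda>(j,t). j(a := t)) ` (A \<times> B)) = (\<Sum>t\<in>B. \<Sum>j\<in>A. \<phi> (j(a := t)))"
proof -
  have inj: "inj_on (\<lambda>(j,t). j(a := t)) (A \<times> B)"
    by (rule inj_on_subset[OF KS_inj[OF assms(1), of m]]) (use assms(2) in auto)
  have "sum \<phi> ((\<lambda>(j,t). j(a := t)) ` (A \<times> B)) = (\<Sum>(j,t)\<in>A \<times> B. \<phi> (j(a := t)))"
    by (subst sum.reindex[OF inj]) (simp add: case_prod_beta o_def)
  also have "\<dots> = (\<Sum>j\<in>A. \<Sum>t\<in>B. \<phi> (j(a := t)))" by (rule sum.cartesian_product[symmetric])
  also have "\<dots> = (\<Sum>t\<in>B. \<Sum>j\<in>A. \<phi> (j(a := t)))" by (rule sum.swap)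
  finally show ?thesis .
qed

lemma KS_le_img:
  assumes "a \<notin> S" "k \<in> KS m S" "t < m"
  shows "{j\<in>KS m (insert a S). j \<le> k(a := t)} = (\<lambda>(j,s). j(a := s)) ` ({j\<in>KS m S. j \<le> k} \<times> {..t})"
proof safe
  fix j assume j: "j \<in> KS m (insert a S)" "j \<le> k(a := t)"
  have ka: "k a = 0" using assms by (auto simp: KS_def)
  have "j(a := 0) \<in> KS m S" using j assms by (auto simp: KS_def)
  moreover have "j(a := 0) \<le> k" using j(2) ka by (auto simp: le_fun_def split: if_splits)
  moreover have "j a \<le> t" using j(2) unfolding le_fun_def by (metis fun_upd_same)
  moreover have "j = (j(a:=0))(a := j a)" by simp
  ultimately show "j \<in> (\<lambda>(j,s). j(a := s)) ` ({j\<in>KS m S. j \<le> k} \<times> {..t})"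
    by (intro image_eqI[where x="(j(a:=0), j a)"]) auto
qed (use assms in \<open>auto simp: KS_def le_fun_def\<close>)

lemma disc_main:
  fixes S :: "'n::finite set"
  assumes m: "m \<ge> 1"
  shows "\<And>\<nu> h D \<omega>. D \<ge> 0 \<Longrightarrow> \<omega> \<ge> 0 \<Longrightarrow>
     (\<forall>k\<in>KS m S. \<bar>\<Sum>j\<in>{j\<in>KS m S. j \<le> k}. \<nu> j\<bar> \<le> D) \<Longrightarrow>
     (\<forall>j\<in>KS m S. \<forall>i. j(i := Suc (j i)) \<in> KS m S \<longrightarrow> \<bar>h (j(i := Suc (j i))) - h j\<bar> \<le> \<omega>) \<Longrightarrow>
     \<bar>(\<Sum>j\<in>KS m S. h j * \<nu> j) - h (\<lambda>_. 0) * (\<Sum>j\<in>KS m S. \<nu> j)\<bar> \<le> 4 ^ card S * real m ^ card S * \<omega> * D"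
  using finite[of S]
proof (induction S rule: finite_induct)
  case empty
  then show ?case by (simp add: KS_empty)
next
  case (insert a S \<nu> h D \<omega>)
  let ?S' = "insert a S"
  let ?s = "card S"
  define \<nu>t where "\<nu>t t j = \<nu> (j(a := t))" for t j
  define ht where "ht t j = h (j(a := t))" for t j
  define P where "P k = (\<Sum>j\<in>{j\<in>KS m ?S'. j \<le> k}. \<nu> j)" for k
  define Q where "Q t k = (\<Sum>j\<in>{j\<in>KS m S. j \<le> k}. \<nu>t t j)" for t k
  define \<sigma> where "\<sigma> t = (\<Sum>j\<in>KS m S. \<nu>t t j)" for t
  have finS: "finite (KS m S)" by (rule finite_KS)
  have PQ: "P (k(a := t)) = (\<Sum>s\<le>t. Q s k)" if k: "k \<in> KS m S" and t: "t < m" for k t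
    unfolding P_def Q_def \<nu>t_def
    by (subst KS_le_img[OF insert(2) k t], subst sum_KS_img[OF insert(2)])
       (auto intro: finite_subset[OF _ finS])
  have Pb: "\<bar>P k\<bar> \<le> D" if "k \<in> KS m ?S'" for k using insert.prems(3) that unfolding P_def by blast
  have Qb: "\<bar>Q t k\<bar> \<le> 2 * D" if k: "k \<in> KS m S" and t: "t < m" for k t
  proof (cases t)
    case 0
    then have "Q t k = P (k(a := t))" using PQ[OF k t] by simp
    then show ?thesis using Pb[OF KS_upd[OF insert(2) k t]] insert.prems(1) by simp
  next
    case (Suc t')
    have "Q t k = P (k(a := t)) - P (k(a := t'))" using PQ[OF k t] PQ[OF k, of t'] t Suc by simp
    moreover have "\<bar>P (k(a := t))\<bar> \<le> D" "\<bar>P (k(a := t'))\<bar> \<le> D"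
      using Pb KS_upd[OF insert(2) k t] KS_upd[OF insert(2) k, of t'] t Suc by auto
    ultimately show ?thesis by linarith
  qed
  have IHt: "\<bar>(\<Sum>j\<in>KS m S. ht t j * \<nu>t t j) - ht t (\<lambda>_. 0) * \<sigma> t\<bar> \<le> 4 ^ ?s * real m ^ ?s * \<omega> * (2 * D)"
    if t: "t < m" for t
    unfolding \<sigma>_def
  proof (rule insert.IH)
    show "0 \<le> 2 * D" "0 \<le> \<omega>" using insert by auto
    show "\<forall>k\<in>KS m S. \<bar>\<Sum>j\<in>{j \<in> KS m S. j \<le> k}. \<nu>t t j\<bar> \<le> 2 * D" using Qb[OF _ t] unfolding Q_def by blast
    show "\<forall>j\<in>KS m S. \<forall>i. j(i := Suc (j i)) \<in> KS m S \<longrightarrow> \<bar>ht t (j(i := Suc (j i))) - ht t j\<bar> \<le> \<omega>"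
    proof (intro ballI allI impI)
      fix j i assume j: "j \<in> KS m S" and ji: "j(i := Suc (j i)) \<in> KS m S"
      have "i \<in> S" using ji j by (auto simp: KS_def) (metis fun_upd_same nat.distinct(1))
      then have ia: "i \<noteq> a" using insert(2) by auto
      have "(j(a := t))(i := Suc ((j(a := t)) i)) = (j(i := Suc (j i)))(a := t)" using ia by (auto simp: fun_eq_iff)
      moreover have "j(a := t) \<in> KS m ?S'" "(j(i := Suc (j i)))(a := t) \<in> KS m ?S'"
        using KS_upd[OF insert(2) j t] KS_upd[OF insert(2) ji t] .
      ultimately show "\<bar>ht t (j(i := Suc (j i))) - ht t j\<bar> \<le> \<omega>"
        using insert.prems(4) unfolding ht_def by metis
    qed
  qed
  have sumeq: "(\<Sum>j\<in>KS m ?S'. \<phi> j) = (\<Sum>t<m. \<Sum>j\<in>KS m S. \<phi> (j(a := t)))" for \<phi>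
    by (subst KS_insert_img[OF insert(2)], rule sum_KS_img[OF insert(2)]) (auto simp: finS)
  define g where "g t = h ((\<lambda>_. 0)(a := t))" for t
  have g0: "g 0 = h (\<lambda>_. 0)" unfolding g_def by (metis fun_upd_triv)
  have htg: "ht t (\<lambda>_. 0) = g t" for t by (simp add: ht_def g_def)
  define top where "top = (\<lambda>i. if i \<in> S then m - 1 else (0::nat))"
  have top: "top \<in> KS m S" using m by (auto simp: KS_def top_def)
  have topall: "{j \<in> KS m S. j \<le> top} = KS m S" using m by (auto simp: KS_def top_def le_fun_def)
  have Qtop: "Q s top = \<sigma> s" for s unfolding Q_def \<sigma>_def topall ..
  have oned: "\<bar>(\<Sum>t<m. g t * \<sigma> t) - g 0 * (\<Sum>t<m. \<sigma> t)\<bar> \<le> 2 * real m * \<omega> * D"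
  proof (rule one_d_bound[OF _ _ m])
    show "\<bar>g (Suc t) - g t\<bar> \<le> \<omega>" if "Suc t < m" for t
    proof -
      have z: "(\<lambda>_. 0::nat)(a := t) \<in> KS m ?S'" using that insert(2) by (auto simp: KS_def)
      have "((\<lambda>_. 0::nat)(a := t))(a := Suc (((\<lambda>_. 0::nat)(a := t)) a)) = (\<lambda>_. 0)(a := Suc t)" by simp
      moreover have "(\<lambda>_. 0::nat)(a := Suc t) \<in> KS m ?S'" using that by (auto simp: KS_def)
      ultimately show ?thesis using insert.prems(4) z unfolding g_def by (metis (no_types, lifting))
    qed
    show "\<bar>\<Sum>s\<le>t. \<sigma> s\<bar> \<le> D" if "t < m" for t
      using PQ[OF top that] Pb[OF KS_upd[OF insert(2) top that]] Qtop by simp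
  qed (use insert in auto)
  have main: "(\<Sum>j\<in>KS m ?S'. h j * \<nu> j) - h (\<lambda>_. 0) * (\<Sum>j\<in>KS m ?S'. \<nu> j)
      = (\<Sum>t<m. (\<Sum>j\<in>KS m S. ht t j * \<nu>t t j) - ht t (\<lambda>_. 0) * \<sigma> t)
        + ((\<Sum>t<m. g t * \<sigma> t) - g 0 * (\<Sum>t<m. \<sigma> t))"
    unfolding sumeq htg g0 by (simp add: ht_def \<nu>t_def \<sigma>_def sum_subtractf)
  define W where "W = 4 ^ ?s * real m ^ Suc ?s * \<omega> * D"
  have "\<bar>\<Sum>t<m. (\<Sum>j\<in>KS m S. ht t j * \<nu>t t j) - ht t (\<lambda>_. 0) * \<sigma> t\<bar>
        \<le> (\<Sum>t<m. 4 ^ ?s * real m ^ ?s * \<omega> * (2 * D))"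
    by (rule order_trans[OF sum_abs], rule sum_mono) (use IHt in auto)
  also have "\<dots> = 2 * W" unfolding W_def sum_constant card_lessThan power_Suc
    by (simp only: mult.commute mult.left_commute mult.assoc)
  finally have b1: "\<bar>\<Sum>t<m. (\<Sum>j\<in>KS m S. ht t j * \<nu>t t j) - ht t (\<lambda>_. 0) * \<sigma> t\<bar> \<le> 2 * W" .
  have mm: "real m \<le> real m ^ Suc ?s" using m by (simp add: power_increasing[of 1 "Suc ?s" "real m", simplified])
  have m4: "real m ^ Suc ?s \<le> 4 ^ ?s * real m ^ Suc ?s"
    using mult_right_mono[OF one_le_power[of "4::real" ?s], of "real m ^ Suc ?s"] by simp
  have "2 * real m * \<omega> * D \<le> 2 * W"
  proof -
    have "real m * (\<omega> * D) \<le> (4 ^ ?s * real m ^ Suc ?s) * (\<omega> * D)"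
      using mm m4 insert.prems(1,2) by (intro mult_right_mono) auto
    then show ?thesis unfolding W_def by (simp only: mult.assoc)
  qed
  then have oned': "\<bar>(\<Sum>t<m. g t * \<sigma> t) - g 0 * (\<Sum>t<m. \<sigma> t)\<bar> \<le> 2 * W" using oned by linarith
  have "\<bar>(\<Sum>j\<in>KS m ?S'. h j * \<nu> j) - h (\<lambda>_. 0) * (\<Sum>j\<in>KS m ?S'. \<nu> j)\<bar> \<le> 4 * W"
    unfolding main by (rule order_trans[OF abs_triangle_ineq]) (use b1 oned' in linarith)
  then show ?case using insert(1,2) unfolding W_def by (simp add: power_Suc mult.assoc mult.left_commute)
qed




lemma One_nth [simp]: "(One :: real^'n) $ i = 1"
proof -
  have "axis i (1::real) \<in> Basis" by simp
  then show ?thesis by (subst cart_eq_inner_axis) (rule inner_sum_Basis)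
qed

lemma One_nth' [simp]: "(\<Sum>x\<in>(Basis::(real^'n) set). x $ i) = 1"
  using One_nth[of i] by (subst (asm) sum_component)

lemma mem_cube: "x \<in> (unit_cube :: (real^'n) set) \<longleftrightarrow> (\<forall>i. 0 \<le> x$i \<and> x$i \<le> 1)"
  unfolding unit_cube_def mem_box_cart One_nth zero_index by simp

lemma linf_ge: "\<bar>x $ i\<bar> \<le> linf_norm x"
  unfolding linf_norm_def by (rule Max_ge) auto

lemma linf_le_iff: "linf_norm x \<le> c \<longleftrightarrow> (\<forall>i. \<bar>x $ i\<bar> \<le> c)"
  unfolding linf_norm_def by (subst Max_le_iff) auto

lemma linf_nonneg: "0 \<le> linf_norm x"
  using linf_ge[of x] abs_ge_zero order_trans by blast

lemma linf_le_norm: "linf_norm x \<le> norm x"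
  by (simp add: linf_le_iff component_le_norm_cart)

lemma linf_zero [simp]: "linf_norm 0 = 0"
  unfolding linf_norm_def by simp

lemma linf_triangle: "linf_norm (x - y) \<le> linf_norm (x - z) + linf_norm (z - y)"
proof -
  have "\<bar>(x - y) $ i\<bar> \<le> linf_norm (x - z) + linf_norm (z - y)" for i
    using linf_ge[of "x - z" i] linf_ge[of "z - y" i] by simp
  then show ?thesis by (simp add: linf_le_iff)
qed

lemma linf_sym: "linf_norm (x - y) = linf_norm (y - x)"
  unfolding linf_norm_def by (simp add: abs_minus_commute)

lemma compact_cube: "compact (unit_cube :: (real^'n) set)"
  by (simp add: unit_cube_def)

lemma cont_bounded:
  fixes f :: "real^'n \<Rightarrow> real"
  assumes "continuous_on unit_cube f"
  obtains B where "\<And>x. x \<in> unit_cube \<Longrightarrow> \<bar>f x\<bar> \<le> B"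
proof -
  have "compact (f ` unit_cube)" by (rule compact_continuous_image[OF assms compact_cube])
  then have "bounded (f ` unit_cube)" by (rule compact_imp_bounded)
  then obtain B where "\<forall>y\<in>f ` unit_cube. norm y \<le> B" unfolding bounded_iff by blast
  then show ?thesis using that by auto
qed

lemma mod_upper:
  fixes f :: "real^'n \<Rightarrow> real"
  assumes "continuous_on unit_cube f" "x \<in> unit_cube" "y \<in> unit_cube" "linf_norm (x - y) \<le> \<delta>"
  shows "\<bar>f x - f y\<bar> \<le> modulus f \<delta>"
proof -
  obtain B where B: "\<And>x. x \<in> unit_cube \<Longrightarrow> \<bar>f x\<bar> \<le> B" using cont_bounded[OF assms(1)] by blast
  let ?A = "{(x, y). x \<in> (unit_cube :: (real^'n) set) \<and> y \<in> unit_cube \<and> linf_norm (x - y) \<le> \<delta>}"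
  have bdd: "bdd_above ((\<lambda>p. \<bar>f (fst p) - f (snd p)\<bar>) ` ?A)"
  proof (rule bdd_aboveI2)
    fix p assume "p \<in> ?A"
    then show "\<bar>f (fst p) - f (snd p)\<bar> \<le> 2 * B" using B[of "fst p"] B[of "snd p"] by auto
  qed
  have mem: "(x, y) \<in> ?A" using assms by auto
  have "\<bar>f (fst (x,y)) - f (snd (x,y))\<bar> \<le> (SUP p\<in>?A. \<bar>f (fst p) - f (snd p)\<bar>)"
    by (rule cSUP_upper[OF mem bdd])
  then show ?thesis unfolding modulus_def by simp
qed

lemma zero_cube: "(0::real^'n) \<in> unit_cube" unfolding mem_cube by simp

lemma mod_nonneg:
  fixes f :: "real^'n \<Rightarrow> real"
  assumes "continuous_on unit_cube f" "\<delta> \<ge> 0"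
  shows "0 \<le> modulus f \<delta>"
proof -
  show ?thesis using mod_upper[OF assms(1) zero_cube zero_cube, of \<delta>] assms(2) by simp
qed

lemma mod_le_lip:
  fixes f :: "real^'n \<Rightarrow> real"
  assumes lip: "\<And>x y. x \<in> unit_cube \<Longrightarrow> y \<in> unit_cube \<Longrightarrow> \<bar>f x - f y\<bar> \<le> linf_norm (x - y)" and d: "\<delta> \<ge> 0"
  shows "modulus f \<delta> \<le> \<delta>"
  unfolding modulus_def
proof (rule cSUP_least)
  have "((0::real^'n), (0::real^'n)) \<in> {(x, y). x \<in> unit_cube \<and> y \<in> unit_cube \<and> linf_norm (x - y) \<le> \<delta>}"
    using d zero_cube by simp
  then show "{(x, y). x \<in> (unit_cube::(real^'n) set) \<and> y \<in> unit_cube \<and> linf_norm (x - y) \<le> \<delta>} \<noteq> {}" by blast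
next
  fix p assume p: "p \<in> {(x, y). x \<in> (unit_cube::(real^'n) set) \<and> y \<in> unit_cube \<and> linf_norm (x - y) \<le> \<delta>}"
  obtain x y where xy: "p = (x, y)" by (cases p)
  from p xy have "x \<in> unit_cube" "y \<in> unit_cube" "linf_norm (x - y) \<le> \<delta>" by auto
  then have "\<bar>f x - f y\<bar> \<le> \<delta>" using lip[of x y] by linarith
  then show "\<bar>f (fst p) - f (snd p)\<bar> \<le> \<delta>" using xy by simp
qed

lemma meas_box:
  fixes u :: "real^'n"
  assumes "u \<in> unit_cube"
  shows "measure lborel (cbox 0 u) = (\<Prod>i\<in>UNIV. u$i)"
proof -
  have "0 \<in> cbox 0 u" using assms unfolding mem_cube by (simp add: mem_box_cart)
  then have "cbox 0 u \<noteq> {}" by blast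
  then show ?thesis by (simp add: content_cbox_cart)
qed

lemma meas_box_bounds:
  fixes u :: "real^'n"
  assumes "u \<in> unit_cube"
  shows "0 \<le> measure lborel (cbox 0 u)" "measure lborel (cbox 0 u) \<le> 1"
  using assms unfolding meas_box[OF assms] mem_cube by (auto intro: prod_nonneg prod_le_1)

definition Fd :: "nat \<Rightarrow> (nat \<Rightarrow> real^'n) \<Rightarrow> real^'n \<Rightarrow> real" where
  "Fd N xi u = \<bar>real (card {i\<in>{..<N}. xi i \<in> cbox 0 u}) / real N - measure lborel (cbox 0 u)\<bar>"

lemma Fd_le1:
  assumes "u \<in> unit_cube"
  shows "Fd N xi u \<le> 1"
proof -
  have c: "card {i\<in>{..<N}. xi i \<in> cbox 0 u} \<le> N"
    by (rule order_trans[OF card_mono[of "{..<N}"]]) auto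
  have "0 \<le> real (card {i\<in>{..<N}. xi i \<in> cbox 0 u}) / real N" by simp
  moreover have "real (card {i\<in>{..<N}. xi i \<in> cbox 0 u}) / real N \<le> 1"
    using c by (cases "N = 0") (auto simp: divide_le_eq_1)
  ultimately show ?thesis using meas_box_bounds[OF assms] unfolding Fd_def by linarith
qed

lemma sd_eq: "star_discrepancy N xi = (SUP u\<in>unit_cube. Fd N xi u)"
  unfolding star_discrepancy_def Fd_def ..

lemma cube_ne: "(unit_cube :: (real^'n) set) \<noteq> {}" using zero_cube by blast

lemma Fd_upper:
  assumes "u \<in> unit_cube"
  shows "Fd N xi u \<le> star_discrepancy N xi"
  unfolding sd_eq by (rule cSUP_upper[OF assms]) (use Fd_le1 in \<open>auto intro!: bdd_aboveI2\<close>)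

lemma sd_le1: "star_discrepancy N (xi :: nat \<Rightarrow> real^'n) \<le> 1"
  unfolding sd_eq by (rule cSUP_least[OF cube_ne]) (rule Fd_le1)

lemma sd_pos:
  fixes xi :: "nat \<Rightarrow> real^'n"
  assumes N: "N \<ge> 1"
  shows "0 < star_discrepancy N xi"
proof -
  define d where "d = CARD('n)"
  have d: "d \<ge> 1" unfolding d_def using finite_UNIV_card_ge_0 by (simp add: Suc_le_eq)
  define t where "t = (1 / (2 * real N)) powr (1 / real d)"
  have tpos: "0 < t" using N unfolding t_def by simp
  have td: "t ^ d = 1 / (2 * real N)"
  proof -
    have "t ^ d = t powr real d" using tpos by (simp add: powr_realpow)
    also have "\<dots> = 1 / (2 * real N)" unfolding t_def using d N by (simp add: powr_powr)
    finally show ?thesis .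
  qed
  have tle: "t \<le> 1" using N d unfolding t_def by (intro powr_le1) auto
  define u :: "real^'n" where "u = t *\<^sub>R One"
  have u: "u \<in> unit_cube" unfolding mem_cube u_def using tpos tle by simp
  have mu: "measure lborel (cbox 0 u) = 1 / (2 * real N)"
  proof -
    have "measure lborel (cbox 0 u) = (\<Prod>i\<in>UNIV. u$i)" by (rule meas_box[OF u])
    also have "\<dots> = t ^ d" by (simp add: u_def d_def)
    finally show ?thesis using td by simp
  qed
  define c where "c = card {i\<in>{..<N}. xi i \<in> cbox 0 u}"
  have ne: "real c / real N \<noteq> 1 / (2 * real N)"
  proof
    assume "real c / real N = 1 / (2 * real N)"
    then have "2 * real c = 1" using N by (simp add: field_simps)
    then have "2 * c = 1" by linarith
    then show False by presburger
  qed
  have "0 < Fd N xi u" unfolding Fd_def mu using ne c_def by simp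
  then show ?thesis using Fd_upper[OF u, of N xi] by linarith
qed

lemma kap1:
  fixes y :: real and m k :: nat
  assumes m: "m \<ge> 1" and y: "0 \<le> y" "y \<le> 1"
  shows "nat \<lceil>real m * y\<rceil> - 1 < m"
    and "nat \<lceil>real m * y\<rceil> - 1 \<le> k \<longleftrightarrow> y \<le> real (k + 1) / real m"
    and "\<bar>y - real (nat \<lceil>real m * y\<rceil> - 1 + 1) / real m\<bar> \<le> 1 / real m"
proof -
  have mp: "real m > 0" using m by simp
  have my0: "0 \<le> real m * y" using y by simp
  have mym: "real m * y \<le> real m" using y mp by (simp add: mult_left_le)
  have c0: "0 \<le> \<lceil>real m * y\<rceil>" using my0 by simp
  have cm: "\<lceil>real m * y\<rceil> \<le> int m" using mym by (simp add: ceiling_le_iff)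
  show "nat \<lceil>real m * y\<rceil> - 1 < m" using cm m by linarith
  have "nat \<lceil>real m * y\<rceil> - 1 \<le> k \<longleftrightarrow> \<lceil>real m * y\<rceil> \<le> int (k + 1)" using c0 by linarith
  also have "\<dots> \<longleftrightarrow> real m * y \<le> real (k + 1)" by (simp add: ceiling_le_iff)
  also have "\<dots> \<longleftrightarrow> y \<le> real (k + 1) / real m" using mp by (simp add: field_simps)
  finally show "nat \<lceil>real m * y\<rceil> - 1 \<le> k \<longleftrightarrow> y \<le> real (k + 1) / real m" .
  show "\<bar>y - real (nat \<lceil>real m * y\<rceil> - 1 + 1) / real m\<bar> \<le> 1 / real m"
  proof (cases "\<lceil>real m * y\<rceil> = 0")
    case True
    then have "real m * y \<le> 0" by (metis ceiling_le_zero order_refl)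
    then have "y = 0" using mp y by (simp add: mult_le_0_iff)
    then show ?thesis using True mp by simp
  next
    case False
    then have eq: "real (nat \<lceil>real m * y\<rceil> - 1 + 1) = real_of_int \<lceil>real m * y\<rceil>" using c0 by linarith
    have "real m * y \<le> real_of_int \<lceil>real m * y\<rceil>" "real_of_int \<lceil>real m * y\<rceil> < real m * y + 1"
      by (simp_all add: ceiling_correct) linarith
    then have "\<bar>real m * y - real_of_int \<lceil>real m * y\<rceil>\<bar> \<le> 1" by linarith
    moreover have "y - real_of_int \<lceil>real m * y\<rceil> / real m = (real m * y - real_of_int \<lceil>real m * y\<rceil>) / real m"
      using mp by (simp add: field_simps)
    ultimately have "\<bar>y - real_of_int \<lceil>real m * y\<rceil> / real m\<bar> \<le> 1 / real m"
      using mp by (simp add: abs_div_pos divide_right_mono)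
    then show ?thesis unfolding eq .
  qed
qed

definition kap :: "nat \<Rightarrow> real^'n \<Rightarrow> ('n \<Rightarrow> nat)" where
  "kap m x = (\<lambda>i. nat \<lceil>real m * x$i\<rceil> - 1)"

definition cpt :: "nat \<Rightarrow> ('n \<Rightarrow> nat) \<Rightarrow> real^'n" where
  "cpt m k = (\<chi> i. real (k i + 1) / real m)"

lemma KS_UNIV: "KS m UNIV = {k. \<forall>i. k i < m}" by (simp add: KS_def)

lemma kap_KS: "m \<ge> 1 \<Longrightarrow> x \<in> unit_cube \<Longrightarrow> kap m x \<in> KS m UNIV"
  unfolding KS_UNIV kap_def mem_cube using kap1(1) by auto

lemma kap_le: "m \<ge> 1 \<Longrightarrow> x \<in> unit_cube \<Longrightarrow> kap m x \<le> k \<longleftrightarrow> x \<in> cbox 0 (cpt m k)"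
  unfolding kap_def mem_cube le_fun_def cpt_def mem_box_cart using kap1(2) by auto

lemma kap_close: "m \<ge> 1 \<Longrightarrow> x \<in> unit_cube \<Longrightarrow> linf_norm (x - cpt m (kap m x)) \<le> 1 / real m"
  unfolding linf_le_iff kap_def mem_cube cpt_def using kap1(3) by auto

lemma cpt_cube: "k \<in> KS m UNIV \<Longrightarrow> cpt m k \<in> unit_cube"
proof -
  assume k: "k \<in> KS m UNIV"
  have "real (k i + 1) \<le> real m" for i
  proof -
    have "k i < m" using k unfolding KS_UNIV by blast
    then show ?thesis by linarith
  qed
  then show ?thesis unfolding mem_cube cpt_def by (auto simp: divide_le_eq_1)
qed

lemma cpt_le_One: "k \<in> KS m UNIV \<Longrightarrow> cbox 0 (cpt m k) \<subseteq> unit_cube"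
proof
  fix x assume k: "k \<in> KS m UNIV" and x: "x \<in> cbox 0 (cpt m k)"
  have "\<forall>i. 0 \<le> cpt m k $ i \<and> cpt m k $ i \<le> 1" using cpt_cube[OF k] unfolding mem_cube .
  then show "x \<in> unit_cube" using x unfolding mem_cube mem_box_cart zero_index by (meson order_trans)
qed

lemma cpt_adj: "m \<ge> 1 \<Longrightarrow> linf_norm (cpt m (k(i := Suc (k i))) - cpt m k) \<le> 1 / real m"
  unfolding linf_le_iff cpt_def by (auto simp: diff_divide_distrib[symmetric])

lemma integral_mult_real: "integral S (\<lambda>x. c * f x) = c * integral S (f :: _ \<Rightarrow> real)"
  using integral_cmul[where c=c and f=f and S=S] by simp

lemma integrable_mult_real: "f integrable_on S \<Longrightarrow> (\<lambda>x. c * f x) integrable_on S"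
  for f :: "_ \<Rightarrow> real"
  using integrable_cmul[where c=c and f=f and S=S] by simp

definition ind :: "nat \<Rightarrow> ('n \<Rightarrow> nat) \<Rightarrow> real^'n \<Rightarrow> real" where
  "ind m j x = of_bool (kap m x = j)"

lemma ind_meas:
  fixes j :: "'n::finite \<Rightarrow> nat"
  shows "ind m j \<in> borel_measurable (lebesgue_on S)"
proof -
  have "ind m j = (\<lambda>x::real^'n. of_bool (\<forall>i. nat \<lceil>real m * x$i\<rceil> - 1 = j i))"
    by (auto simp: fun_eq_iff ind_def kap_def)
  moreover have "(\<lambda>x::real^'n. of_bool (\<forall>i. nat \<lceil>real m * x$i\<rceil> - 1 = j i) :: real) \<in> borel_measurable borel"
    by measurable
  ultimately show ?thesis
    by (simp add: measurable_restrict_space1 measurable_completion)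
qed

lemma ind_int: "ind m j integrable_on unit_cube"
proof (rule measurable_bounded_by_integrable_imp_integrable[OF ind_meas])
  show "(\<lambda>x. 1::real) integrable_on unit_cube" unfolding unit_cube_def by (rule integrable_const)
  show "norm (ind m j x) \<le> 1" for x by (simp add: ind_def)
  show "unit_cube \<in> sets lebesgue" unfolding unit_cube_def by simp
qed

lemma sum_ofbool_delta:
  assumes "finite A"
  shows "(\<Sum>j\<in>A. c j * of_bool (a = j)) = (if a \<in> A then c a else (0::real))"
proof -
  have "(\<Sum>j\<in>A. c j * of_bool (a = j)) = (\<Sum>j\<in>A. if a = j then c j else 0)"
    by (rule sum.cong) auto
  also have "\<dots> = (if a \<in> A then c a else 0)" using assms by (simp add: sum.delta)
  finally show ?thesis .
qed

lemma ind_sum_h: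
  assumes "m \<ge> 1" "x \<in> unit_cube"
  shows "(\<Sum>j\<in>KS m UNIV. c j * ind m j x) = c (kap m x)"
  unfolding ind_def using sum_ofbool_delta[OF finite_KS, of c "kap m x" m UNIV] kap_KS[OF assms] by simp

lemma ind_sum_le:
  assumes "m \<ge> 1" "x \<in> unit_cube"
  shows "(\<Sum>j\<in>{j\<in>KS m UNIV. j \<le> k}. ind m j x) = of_bool (x \<in> cbox 0 (cpt m k))"
proof -
  have "(\<Sum>j\<in>{j\<in>KS m UNIV. j \<le> k}. 1 * ind m j x) = (if kap m x \<in> {j\<in>KS m UNIV. j \<le> k} then 1 else 0)"
    unfolding ind_def by (rule sum_ofbool_delta) (rule finite_subset[OF _ finite_KS], auto)
  then show ?thesis using kap_KS[OF assms] kap_le[OF assms] by simp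
qed

lemma ind_sum_all:
  assumes "m \<ge> 1" "x \<in> unit_cube"
  shows "(\<Sum>j\<in>KS m UNIV. ind m j x) = 1"
  using ind_sum_h[OF assms, of "\<lambda>_. 1"] by simp

lemma content_cube: "measure lborel (unit_cube :: (real^'n) set) = 1"
proof -
  have "One \<in> (unit_cube :: (real^'n) set)" unfolding mem_cube by simp
  from meas_box[OF this] show ?thesis unfolding unit_cube_def by simp
qed

lemma lam_anch:
  assumes m: "m \<ge> 1" and k: "k \<in> KS m UNIV"
  shows "(\<Sum>j\<in>{j\<in>KS m UNIV. j \<le> k}. integral unit_cube (ind m j)) = measure lborel (cbox 0 (cpt m k))"
proof -
  have fin: "finite {j\<in>KS m UNIV. j \<le> k}" by (rule finite_subset[OF _ finite_KS]) auto
  have "(\<Sum>j\<in>{j\<in>KS m UNIV. j \<le> k}. integral unit_cube (ind m j))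
      = integral unit_cube (\<lambda>x. \<Sum>j\<in>{j\<in>KS m UNIV. j \<le> k}. ind m j x)"
    by (rule integral_sum[symmetric, OF fin ind_int])
  also have "\<dots> = integral unit_cube (\<lambda>x. if x \<in> cbox 0 (cpt m k) then 1 else 0)"
    by (rule integral_cong) (simp add: ind_sum_le[OF m])
  also have "\<dots> = integral (cbox 0 (cpt m k) \<inter> unit_cube) (\<lambda>x. 1)"
    by (rule integral_restrict_Int)
  also have "cbox 0 (cpt m k) \<inter> unit_cube = cbox 0 (cpt m k)" using cpt_le_One[OF k] by blast
  finally show ?thesis by simp
qed

lemma lam_all:
  assumes m: "m \<ge> 1"
  shows "(\<Sum>j\<in>KS m (UNIV :: 'n::finite set). integral unit_cube (ind m j)) = (1 :: real)"
proof -
  have fin: "finite (KS m (UNIV::'n set))" by (rule finite_KS)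
  have "(\<Sum>j\<in>KS m (UNIV :: 'n set). integral unit_cube (ind m j)) = integral unit_cube (\<lambda>x. \<Sum>j\<in>KS m (UNIV :: 'n set). ind m j x)"
    by (rule integral_sum[symmetric, OF fin ind_int])
  also have "\<dots> = integral (unit_cube :: (real^'n) set) (\<lambda>x. 1)"
    by (rule integral_cong) (simp add: ind_sum_all[OF m])
  also have "\<dots> = 1" using content_cube unfolding unit_cube_def by simp
  finally show ?thesis .
qed

lemma cnt_anch:
  fixes N :: nat and xi :: "nat \<Rightarrow> real^'n"
  assumes m: "m \<ge> 1" and xi: "\<forall>i<N. xi i \<in> unit_cube"
  shows "(\<Sum>j\<in>{j\<in>KS m UNIV. j \<le> k}. \<Sum>i<N. ind m j (xi i)) = real (card {i\<in>{..<N}. xi i \<in> cbox 0 (cpt m k)})"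
proof -
  have fin: "finite {j\<in>KS m UNIV. j \<le> k}" by (rule finite_subset[OF _ finite_KS]) auto
  have "(\<Sum>j\<in>{j\<in>KS m UNIV. j \<le> k}. \<Sum>i<N. ind m j (xi i)) = (\<Sum>i<N. \<Sum>j\<in>{j\<in>KS m UNIV. j \<le> k}. ind m j (xi i))"
    by (rule sum.swap)
  also have "\<dots> = (\<Sum>i<N. of_bool (xi i \<in> cbox 0 (cpt m k)))"
  proof (rule sum.cong[OF refl])
    fix i assume "i \<in> {..<N}"
    then show "(\<Sum>j\<in>{j\<in>KS m UNIV. j \<le> k}. ind m j (xi i)) = of_bool (xi i \<in> cbox 0 (cpt m k))"
      using ind_sum_le[OF m, of "xi i" k] xi by simp
  qed
  also have "\<dots> = real (card ({..<N} \<inter> {i. xi i \<in> cbox 0 (cpt m k)}))" by (rule sum_of_bool_eq) auto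
  also have "{..<N} \<inter> {i. xi i \<in> cbox 0 (cpt m k)} = {i\<in>{..<N}. xi i \<in> cbox 0 (cpt m k)}" by blast
  finally show ?thesis .
qed

lemma cnt_all:
  fixes N :: nat and xi :: "nat \<Rightarrow> real^'n"
  assumes m: "m \<ge> 1" and xi: "\<forall>i<N. xi i \<in> unit_cube"
  shows "(\<Sum>j\<in>KS m UNIV. \<Sum>i<N. ind m j (xi i)) = real N"
proof -
  have "(\<Sum>j\<in>KS m UNIV. \<Sum>i<N. ind m j (xi i)) = (\<Sum>i<N. \<Sum>j\<in>KS m UNIV. ind m j (xi i))"
    by (rule sum.swap)
  also have "\<dots> = (\<Sum>i<N. 1)"
  proof (rule sum.cong[OF refl])
    fix i assume "i \<in> {..<N}"
    then show "(\<Sum>j\<in>KS m UNIV. ind m j (xi i)) = 1" using ind_sum_all[OF m, of "xi i"] xi by simp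
  qed
  finally show ?thesis by simp
qed

lemma avg_bound:
  fixes a b :: "nat \<Rightarrow> real"
  assumes "\<And>i. i < N \<Longrightarrow> \<bar>a i - b i\<bar> \<le> \<omega>" "N \<ge> 1"
  shows "\<bar>(1 / real N) * (\<Sum>i<N. a i) - (1 / real N) * (\<Sum>i<N. b i)\<bar> \<le> \<omega>"
proof -
  have Np: "real N > 0" using assms(2) by simp
  have "\<bar>\<Sum>i<N. a i - b i\<bar> \<le> (\<Sum>i<N. \<omega>)"
    by (rule order_trans[OF sum_abs], rule sum_mono) (use assms(1) in auto)
  then have s: "\<bar>\<Sum>i<N. a i - b i\<bar> \<le> real N * \<omega>" by simp
  have eq: "(1 / real N) * (\<Sum>i<N. a i) - (1 / real N) * (\<Sum>i<N. b i) = (\<Sum>i<N. a i - b i) / real N"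
    by (simp add: sum_subtractf diff_divide_distrib)
  have "\<bar>(\<Sum>i<N. a i - b i) / real N\<bar> = \<bar>\<Sum>i<N. a i - b i\<bar> / real N" using Np by simp
  also have "\<dots> \<le> \<omega>" using s Np by (simp add: pos_divide_le_eq mult.commute)
  finally show ?thesis unfolding eq .
qed

lemma split_alg: "S = A - G \<Longrightarrow> T = 0 \<Longrightarrow> F - V = (F - G) - (S - z * T) + (A - (V::real))"
  by simp

lemma abs3: "\<bar>a\<bar> \<le> x \<Longrightarrow> \<bar>b\<bar> \<le> y \<Longrightarrow> \<bar>c\<bar> \<le> z \<Longrightarrow> \<bar>a - b + c\<bar> \<le> x + y + (z::real)"
  by linarith

lemma koksma_m:
  fixes N :: nat and xi :: "nat \<Rightarrow> real^'n" and f :: "real^'n \<Rightarrow> real"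
  assumes m: "m \<ge> 1" and N: "N \<ge> 1" and xi: "\<forall>i<N. xi i \<in> unit_cube"
    and f: "continuous_on unit_cube f" and md: "1 / real m \<le> \<delta>"
  shows "\<bar>integral unit_cube f - (1 / real N) * (\<Sum>i<N. f (xi i))\<bar>
     \<le> (2 + 4 ^ CARD('n) * real m ^ CARD('n) * star_discrepancy N xi) * modulus f \<delta>"
proof -
  define K where "K = KS m (UNIV :: 'n set)"
  define D where "D = star_discrepancy N xi"
  define \<omega> where "\<omega> = modulus f \<delta>"
  define h where "h j = f (cpt m j)" for j :: "'n \<Rightarrow> nat"
  define lam where "lam j = integral unit_cube (ind m j)" for j :: "'n \<Rightarrow> nat"
  define cnt where "cnt j = (\<Sum>i<N. ind m j (xi i)) / real N" for j :: "'n \<Rightarrow> nat"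
  define nu where "nu j = cnt j - lam j" for j :: "'n \<Rightarrow> nat"
  define g where "g x = (\<Sum>j\<in>K. h j * ind m j x)" for x :: "real^'n"
  have finK: "finite K" unfolding K_def by (rule finite_KS)
  have Np: "real N > 0" using N by simp
  have dpos: "\<delta> \<ge> 0" using md m by (smt (verit) divide_nonneg_nonneg of_nat_0_le_iff)
  have \<omega>0: "\<omega> \<ge> 0" unfolding \<omega>_def by (rule mod_nonneg[OF f dpos])
  have D0: "D \<ge> 0" unfolding D_def using sd_pos[OF N, of xi] by simp
  have close: "\<bar>f x - f (cpt m (kap m x))\<bar> \<le> \<omega>" if x: "x \<in> unit_cube" for x
    unfolding \<omega>_def
    by (rule mod_upper[OF f x cpt_cube[OF kap_KS[OF m x]]]) (use kap_close[OF m x] md in linarith)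
  have gx: "g x = f (cpt m (kap m x))" if x: "x \<in> unit_cube" for x
    unfolding g_def K_def h_def using ind_sum_h[OF m x, of "\<lambda>j. f (cpt m j)"] by simp
  have gint: "g integrable_on unit_cube"
    unfolding g_def by (rule integrable_sum[OF finK]) (rule integrable_mult_real[OF ind_int])
  have intg: "integral unit_cube g = (\<Sum>j\<in>K. h j * lam j)"
    unfolding g_def lam_def
    by (subst integral_sum[OF finK]) (auto intro: integrable_mult_real[OF ind_int] simp: integral_mult_real)
  have fint: "f integrable_on unit_cube" using f unfolding unit_cube_def by (rule integrable_continuous)
  have A: "\<bar>integral unit_cube f - integral unit_cube g\<bar> \<le> \<omega>"
  proof -
    have "((\<lambda>x. f x - g x) has_integral (integral unit_cube f - integral unit_cube g)) unit_cube"
      using integral_diff[OF fint gint] integrable_diff[OF fint gint] by (metis integrable_integral)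
    then have "norm (integral unit_cube f - integral unit_cube g) \<le> \<omega> * measure lborel (unit_cube :: (real^'n) set)"
      unfolding unit_cube_def
      by (rule has_integral_bound[OF \<omega>0]) (use close gx in \<open>auto simp: unit_cube_def\<close>)
    then show ?thesis using content_cube[where 'n='n] by simp
  qed
  have B: "(\<Sum>j\<in>K. h j * cnt j) = (1 / real N) * (\<Sum>i<N. f (cpt m (kap m (xi i))))"
  proof -
    have "(\<Sum>j\<in>K. h j * cnt j) = (1 / real N) * (\<Sum>j\<in>K. \<Sum>i<N. h j * ind m j (xi i))"
      unfolding cnt_def by (simp add: sum_distrib_left sum_divide_distrib)
    also have "(\<Sum>j\<in>K. \<Sum>i<N. h j * ind m j (xi i)) = (\<Sum>i<N. \<Sum>j\<in>K. h j * ind m j (xi i))"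
      by (rule sum.swap)
    also have "\<dots> = (\<Sum>i<N. f (cpt m (kap m (xi i))))"
    proof (rule sum.cong[OF refl])
      fix i assume "i \<in> {..<N}"
      then have "xi i \<in> unit_cube" using xi by simp
      then show "(\<Sum>j\<in>K. h j * ind m j (xi i)) = f (cpt m (kap m (xi i)))"
        unfolding K_def h_def using ind_sum_h[OF m, of "xi i" "\<lambda>j. f (cpt m j)"] by simp
    qed
    finally show ?thesis .
  qed
  have C: "\<bar>(1 / real N) * (\<Sum>i<N. f (cpt m (kap m (xi i)))) - (1 / real N) * (\<Sum>i<N. f (xi i))\<bar> \<le> \<omega>"
    by (rule avg_bound[OF _ N]) (use close xi in \<open>auto simp: abs_minus_commute\<close>)
  have nu_anch: "\<bar>\<Sum>j\<in>{j\<in>K. j \<le> k}. nu j\<bar> \<le> D" if k: "k \<in> K" for k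
  proof -
    have fin: "finite {j\<in>K. j \<le> k}" using finK by simp
    have "(\<Sum>j\<in>{j\<in>K. j \<le> k}. nu j) = (\<Sum>j\<in>{j\<in>K. j \<le> k}. \<Sum>i<N. ind m j (xi i)) / real N - (\<Sum>j\<in>{j\<in>K. j \<le> k}. lam j)"
      unfolding nu_def cnt_def by (simp add: sum_subtractf sum_divide_distrib)
    also have "\<dots> = real (card {i\<in>{..<N}. xi i \<in> cbox 0 (cpt m k)}) / real N - measure lborel (cbox 0 (cpt m k))"
      using cnt_anch[OF m xi, of k] lam_anch[OF m, of k] k unfolding K_def lam_def by simp
    finally have "\<bar>\<Sum>j\<in>{j\<in>K. j \<le> k}. nu j\<bar> = Fd N xi (cpt m k)" unfolding Fd_def by simp
    then show ?thesis using Fd_upper[OF cpt_cube, of k m N xi] k unfolding K_def D_def by simp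
  qed
  have nu_all: "(\<Sum>j\<in>K. nu j) = 0"
  proof -
    have "(\<Sum>j\<in>K. nu j) = (\<Sum>j\<in>K. \<Sum>i<N. ind m j (xi i)) / real N - (\<Sum>j\<in>K. lam j)"
      unfolding nu_def cnt_def by (simp add: sum_subtractf sum_divide_distrib)
    also have "\<dots> = 0" using cnt_all[OF m xi] lam_all[OF m] Np unfolding K_def lam_def by simp
    finally show ?thesis .
  qed
  have adj: "\<forall>j\<in>K. \<forall>i. j(i := Suc (j i)) \<in> K \<longrightarrow> \<bar>h (j(i := Suc (j i))) - h j\<bar> \<le> \<omega>"
  proof (intro ballI allI impI)
    fix j i assume j: "j \<in> K" and j': "j(i := Suc (j i)) \<in> K"
    show "\<bar>h (j(i := Suc (j i))) - h j\<bar> \<le> \<omega>"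
      unfolding h_def \<omega>_def
      by (rule mod_upper[OF f cpt_cube cpt_cube]) (use j j' cpt_adj[OF m, of j i] md K_def in auto)
  qed
  have Dd: "\<bar>(\<Sum>j\<in>K. h j * nu j) - h (\<lambda>_. 0) * (\<Sum>j\<in>K. nu j)\<bar> \<le> 4 ^ CARD('n) * real m ^ CARD('n) * \<omega> * D"
    unfolding K_def by (rule disc_main[OF m]) (use D0 \<omega>0 nu_anch adj in \<open>simp_all add: K_def\<close>)
  have hnu: "(\<Sum>j\<in>K. h j * nu j) = (1 / real N) * (\<Sum>i<N. f (cpt m (kap m (xi i)))) - integral unit_cube g"
    unfolding intg B[symmetric] nu_def by (simp add: right_diff_distrib sum_subtractf)
  have split: "integral unit_cube f - (1 / real N) * (\<Sum>i<N. f (xi i))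
     = (integral unit_cube f - integral unit_cube g) - ((\<Sum>j\<in>K. h j * nu j) - h (\<lambda>_. 0) * (\<Sum>j\<in>K. nu j))
       + ((1 / real N) * (\<Sum>i<N. f (cpt m (kap m (xi i)))) - (1 / real N) * (\<Sum>i<N. f (xi i)))"
    by (rule split_alg[OF hnu nu_all])
  have "\<bar>integral unit_cube f - (1 / real N) * (\<Sum>i<N. f (xi i))\<bar> \<le> \<omega> + 4 ^ CARD('n) * real m ^ CARD('n) * \<omega> * D + \<omega>"
    unfolding split by (rule abs3[OF A Dd C])
  also have "\<dots> = (2 + 4 ^ CARD('n) * real m ^ CARD('n) * D) * \<omega>" by (simp add: distrib_right)
  finally show ?thesis unfolding D_def \<omega>_def .
qed

lemma koksma:
  fixes N :: nat and xi :: "nat \<Rightarrow> real^'n" and f :: "real^'n \<Rightarrow> real"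
  assumes N: "N \<ge> 1" and xi: "\<forall>i<N. xi i \<in> unit_cube" and f: "continuous_on unit_cube f"
  shows "\<bar>integral unit_cube f - (1 / real N) * (\<Sum>i<N. f (xi i))\<bar>
     \<le> (2 + 8 ^ CARD('n)) * modulus f (star_discrepancy N xi powr (1 / real CARD('n)))"
proof -
  define d where "d = CARD('n)"
  have d: "d \<ge> 1" unfolding d_def using finite_UNIV_card_ge_0 by (simp add: Suc_le_eq)
  define D where "D = star_discrepancy N xi"
  have D0: "D > 0" unfolding D_def by (rule sd_pos[OF N])
  have D1: "D \<le> 1" unfolding D_def by (rule sd_le1)
  define \<delta> where "\<delta> = D powr (1 / real d)"
  have \<delta>0: "\<delta> > 0" unfolding \<delta>_def using D0 by simp
  have \<delta>1: "\<delta> \<le> 1" unfolding \<delta>_def using D0 D1 d by (intro powr_le1) auto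
  have \<delta>d: "\<delta> ^ d = D"
  proof -
    have "\<delta> ^ d = \<delta> powr real d" using \<delta>0 by (simp add: powr_realpow)
    also have "\<dots> = D" unfolding \<delta>_def using d D0 by (simp add: powr_powr)
    finally show ?thesis .
  qed
  define m where "m = nat \<lceil>1 / \<delta>\<rceil>"
  have inv1: "1 / \<delta> \<ge> 1" using \<delta>0 \<delta>1 by (simp add: field_simps)
  have mge: "real m \<ge> 1 / \<delta>" unfolding m_def by linarith
  have m1: "m \<ge> 1" using mge inv1 by linarith
  have mle: "real m \<le> 2 / \<delta>" unfolding m_def using inv1 by linarith
  have md: "1 / real m \<le> \<delta>" using mge \<delta>0 m1 by (simp add: field_simps)
  have K: "\<bar>integral unit_cube f - (1 / real N) * (\<Sum>i<N. f (xi i))\<bar>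
     \<le> (2 + 4 ^ d * real m ^ d * D) * modulus f \<delta>"
    using koksma_m[OF m1 N xi f md] unfolding d_def D_def .
  have "real m ^ d * D \<le> (2 / \<delta>) ^ d * D"
    using mle D0 by (intro mult_right_mono power_mono) auto
  also have "\<dots> = 2 ^ d" using \<delta>d \<delta>0 D0 by (simp add: power_divide)
  finally have "4 ^ d * real m ^ d * D \<le> 4 ^ d * 2 ^ d"
    by (simp add: mult.assoc)
  also have "\<dots> = 8 ^ d" by (simp add: power_mult_distrib[symmetric])
  finally have c: "2 + 4 ^ d * real m ^ d * D \<le> 2 + 8 ^ d" by simp
  have "0 \<le> modulus f \<delta>" by (rule mod_nonneg[OF f]) (use \<delta>0 in auto)
  then have "(2 + 4 ^ d * real m ^ d * D) * modulus f \<delta> \<le> (2 + 8 ^ d) * modulus f \<delta>"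
    using c by (rule mult_right_mono[rotated])
  then show ?thesis using K unfolding d_def D_def \<delta>_def by linarith
qed

lemma one_dim_point:
  fixes xs :: "nat \<Rightarrow> real" and N :: nat
  assumes N: "N \<ge> 1" and xs: "\<And>p. p < N \<Longrightarrow> 0 \<le> xs p \<and> xs p \<le> 1"
    and F: "\<And>t. 0 \<le> t \<Longrightarrow> t \<le> 1 \<Longrightarrow> \<bar>real (card {p\<in>{..<N}. xs p \<le> t}) / real N - t\<bar> \<le> D"
    and s: "0 \<le> s" "s \<le> 1"
  shows "\<exists>p<N. \<bar>s - xs p\<bar> \<le> D"
proof (rule ccontr)
  assume "\<not> ?thesis"
  then have far: "\<And>p. p < N \<Longrightarrow> \<bar>s - xs p\<bar> > D" by force
  define T where "T = xs ` {..<N}"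
  have finT: "finite T" unfolding T_def by simp
  have Tne: "T \<noteq> {}" unfolding T_def using N by (metis image_is_empty lessThan_iff less_le_trans not_one_le_zero empty_iff not_less zero_less_one)
  define L where "L = {x\<in>T. x < s}"
  define R where "R = {x\<in>T. x > s}"
  have finL: "finite L" "finite R" unfolding L_def R_def using finT by auto
  have D0: "0 \<le> D" using F[of 0] by linarith
  have LR: "x \<in> L \<or> x \<in> R" if x: "x \<in> T" for x
  proof -
    obtain p where p: "p < N" "x = xs p" using x unfolding T_def by auto
    then have "x \<noteq> s" using far[OF p(1)] D0 by auto
    then show ?thesis using x unfolding L_def R_def by auto
  qed
  have Lfar: "x < s - D" if "x \<in> L" for x using that far unfolding L_def T_def by force
  have Rfar: "x > s + D" if "x \<in> R" for x using that far unfolding R_def T_def by force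
  have T01: "0 \<le> x \<and> x \<le> 1" if "x \<in> T" for x using that xs unfolding T_def by auto
  have Np: "real N > 0" using N by simp
  define cnt where "cnt t = real (card {p\<in>{..<N}. xs p \<le> t}) / real N" for t
  have cnt0: "cnt t = 0" if "\<forall>p<N. xs p > t" for t
  proof -
    have "{p\<in>{..<N}. xs p \<le> t} = {}" using that by force
    then show ?thesis unfolding cnt_def by simp
  qed
  have cnt1: "cnt t = 1" if "\<forall>p<N. xs p \<le> t" for t
  proof -
    have "{p\<in>{..<N}. xs p \<le> t} = {..<N}" using that by force
    then show ?thesis unfolding cnt_def using Np by simp
  qed
  have Fc: "\<bar>cnt t - t\<bar> \<le> D" if "0 \<le> t" "t \<le> 1" for t using F[OF that] unfolding cnt_def .
  show False
  proof (cases "L = {}")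
    case True
    then have RT: "R = T" using LR unfolding R_def by auto
    define r where "r = Min R"
    have r: "r \<in> R" unfolding r_def using RT Tne finL by (simp add: Min_in)
    have rle: "\<And>x. x \<in> R \<Longrightarrow> r \<le> x" unfolding r_def using finL by simp
    define t where "t = (s + D + r) / 2"
    have "r > s + D" using Rfar[OF r] .
    then have t1: "s + D < t" "t < r" unfolding t_def by auto
    have "r \<le> 1" using T01 r RT by auto
    moreover have "0 \<le> s + D"
    proof -
      have "0 \<le> r" using T01 r RT by auto
      have "\<bar>s - r\<bar> > D" using r RT far unfolding T_def by auto
      then show ?thesis using s D0 by linarith
    qed
    ultimately have t01: "0 \<le> t" "t \<le> 1" using t1 by auto
    have "\<forall>p<N. xs p > t"
    proof (intro allI impI)
      fix p assume "p < N"
      then have "xs p \<in> R" using RT unfolding T_def by auto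
      then show "xs p > t" using rle t1 by force
    qed
    then have "cnt t = 0" by (rule cnt0)
    then show False using Fc[OF t01] t1 \<open>0 \<le> s + D\<close> s by linarith
  next
    case False
    define l where "l = Max L"
    have l: "l \<in> L" unfolding l_def using False finL by (simp add: Max_in)
    have lge: "\<And>x. x \<in> L \<Longrightarrow> x \<le> l" unfolding l_def using finL by simp
    have l01: "0 \<le> l" "l \<le> 1" using T01 l unfolding L_def by auto
    have ls: "l < s - D" by (rule Lfar[OF l])
    show False
    proof (cases "R = {}")
      case True
      have "\<forall>p<N. xs p \<le> l"
      proof (intro allI impI)
        fix p assume "p < N"
        then have "xs p \<in> T" unfolding T_def by auto
        then have "xs p \<in> L" using LR True by auto
        then show "xs p \<le> l" by (rule lge)
      qed
      then have "cnt l = 1" by (rule cnt1)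
      then show False using Fc[OF l01] ls s by linarith
    next
      case False
      define r where "r = Min R"
      have r: "r \<in> R" unfolding r_def using False finL by (simp add: Min_in)
      have rle: "\<And>x. x \<in> R \<Longrightarrow> r \<le> x" unfolding r_def using finL by simp
      have rs: "r > s + D" by (rule Rfar[OF r])
      have r1: "r \<le> 1" using T01 r unfolding R_def by auto
      define t where "t = (s + D + r) / 2"
      have t1: "s + D < t" "t < r" unfolding t_def using rs by auto
      have t01: "0 \<le> t" "t \<le> 1" using t1 r1 s D0 by auto
      have "{p\<in>{..<N}. xs p \<le> t} = {p\<in>{..<N}. xs p \<le> l}"
      proof (intro Collect_cong conj_cong refl iffI)
        fix p assume p: "p \<in> {..<N}" and "xs p \<le> t"
        then have "xs p \<in> T" unfolding T_def by auto
        then show "xs p \<le> l" using LR[of "xs p"] rle[of "xs p"] lge[of "xs p"] \<open>xs p \<le> t\<close> t1 by force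
      next
        fix p assume "xs p \<le> l"
        then show "xs p \<le> t" using ls t1 D0 by linarith
      qed
      then have "cnt t = cnt l" unfolding cnt_def by simp
      then show False using Fc[OF t01] Fc[OF l01] ls t1 by linarith
    qed
  qed
qed

definition gd :: "(real^'n) set \<Rightarrow> real^'n \<Rightarrow> real" where
  "gd G u = Inf ((\<lambda>a. linf_norm (u - a)) ` G)"

lemma gd_props:
  assumes fin: "finite G" and ne: "G \<noteq> {}"
  shows "\<And>a. a \<in> G \<Longrightarrow> gd G u \<le> linf_norm (u - a)"
    and "\<exists>a\<in>G. gd G u = linf_norm (u - a)"
    and "0 \<le> gd G u"
proof -
  have eq: "gd G u = Min ((\<lambda>a. linf_norm (u - a)) ` G)"
    unfolding gd_def using fin ne by (simp add: cInf_eq_Min)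
  show "\<And>a. a \<in> G \<Longrightarrow> gd G u \<le> linf_norm (u - a)" unfolding eq using fin by simp
  show ex: "\<exists>a\<in>G. gd G u = linf_norm (u - a)" unfolding eq using fin ne
    by (metis (no_types, lifting) Min_in finite_imageI image_iff image_is_empty)
  then show "0 \<le> gd G u" using linf_nonneg by metis
qed

lemma gd_lip:
  assumes fin: "finite G" and ne: "G \<noteq> {}"
  shows "\<bar>gd G u - gd G v\<bar> \<le> linf_norm (u - v)"
proof -
  have one: "gd G x \<le> gd G y + linf_norm (x - y)" for x y
  proof -
    obtain a where a: "a \<in> G" "gd G y = linf_norm (y - a)" using gd_props(2)[OF fin ne] by blast
    have "gd G x \<le> linf_norm (x - a)" by (rule gd_props(1)[OF fin ne a(1)])
    also have "\<dots> \<le> linf_norm (x - y) + linf_norm (y - a)" by (rule linf_triangle)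
    finally show ?thesis using a(2) by linarith
  qed
  show ?thesis using one[of u v] one[of v u] linf_sym[of u v] by linarith
qed

lemma gd_cont:
  assumes fin: "finite G" and ne: "G \<noteq> {}"
  shows "continuous_on S (gd G)"
  unfolding continuous_on_iff
proof (intro ballI allI impI)
  fix x e assume "x \<in> S" "(0::real) < e"
  show "\<exists>d>0. \<forall>x'\<in>S. dist x' x < d \<longrightarrow> dist (gd G x') (gd G x) < e"
  proof (intro exI[of _ e] conjI ballI impI)
    fix x' assume "dist x' x < e"
    moreover have "dist (gd G x') (gd G x) \<le> dist x' x"
      using gd_lip[OF fin ne, of x' x] linf_le_norm[of "x' - x"] by (simp add: dist_norm dist_real_def)
    ultimately show "dist (gd G x') (gd G x) < e" by linarith
  qed (use \<open>0 < e\<close> in auto)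
qed

lemma Cset_nonneg:
  assumes C: "\<forall>N (xi :: nat \<Rightarrow> real^'n) f. N \<ge> 1 \<longrightarrow> (\<forall>i<N. xi i \<in> unit_cube) \<longrightarrow>
              continuous_on unit_cube f \<longrightarrow>
              \<bar>integral unit_cube f - (1 / real N) * (\<Sum>i<N. f (xi i))\<bar>
                \<le> C * modulus f (star_discrepancy N xi powr (1 / real CARD('n)))"
  shows "C \<ge> 0"
proof (rule ccontr)
  assume neg: "\<not> C \<ge> 0"
  fix a :: 'n
  define f :: "real^'n \<Rightarrow> real" where "f x = x $ a" for x
  have fc: "continuous_on unit_cube f" unfolding f_def by (intro continuous_intros)
  have le0: "\<bar>integral unit_cube f - f p\<bar> \<le> 0" if p: "p \<in> unit_cube" for p
  proof -
    let ?xi = "\<lambda>_::nat. p"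
    let ?M = "modulus f (star_discrepancy 1 ?xi powr (1 / real CARD('n)))"
    have h1: "\<bar>integral unit_cube f - (1 / real 1) * (\<Sum>i<1. f (?xi i))\<bar> \<le> C * ?M"
      using C[rule_format, of 1 ?xi f] p fc by simp
    have h2: "0 \<le> ?M" by (rule mod_nonneg[OF fc]) simp
    have h3: "C * ?M \<le> 0" using neg h2 by (simp add: mult_nonpos_nonneg)
    have "(1 / real 1) * (\<Sum>i<1. f (?xi i)) = f p" by simp
    then show ?thesis using h1 h3 by linarith
  qed
  have o: "(One :: real^'n) \<in> unit_cube" unfolding mem_cube by simp
  from le0[OF zero_cube] le0[OF o] show False unfolding f_def by simp
qed

theorem corollary7p2:
  fixes N :: nat and xi :: "nat \<Rightarrow> real^'n"
  assumes "N \<ge> 1" and "\<forall>i<N. xi i \<in> unit_cube"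
  shows "e1_unif (xi ` {..<N})
           \<le> Cd TYPE('n) * star_discrepancy N xi powr (1 / real CARD('n))
       \<and> (CARD('n) = 1 \<longrightarrow> e1_unif (xi ` {..<N}) \<le> star_discrepancy N xi)"
proof -
  note N = assms(1) and xi = assms(2)
  define G where "G = xi ` {..<N}"
  have finG: "finite G" unfolding G_def by simp
  have neG: "G \<noteq> {}" unfolding G_def using N by (metis image_is_empty lessThan_iff less_le_trans not_one_le_zero empty_iff not_less zero_less_one)
  define D where "D = star_discrepancy N xi"
  have D0: "D > 0" unfolding D_def by (rule sd_pos[OF N])
  define \<delta> where "\<delta> = D powr (1 / real CARD('n))"
  have \<delta>0: "\<delta> > 0" unfolding \<delta>_def using D0 by simp
  have e1: "e1_unif G = integral unit_cube (gd G)" unfolding e1_unif_def gd_def ..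
  have gc: "continuous_on unit_cube (gd G)" by (rule gd_cont[OF finG neG])
  have gxi: "gd G (xi i) = 0" if "i < N" for i
  proof -
    have "xi i \<in> G" using that unfolding G_def by simp
    then have "gd G (xi i) \<le> linf_norm (xi i - xi i)" by (rule gd_props(1)[OF finG neG])
    then show ?thesis using gd_props(3)[OF finG neG, of "xi i"] by simp
  qed
  have avg0: "(1 / real N) * (\<Sum>i<N. gd G (xi i)) = 0" using gxi by simp
  have gint: "gd G integrable_on unit_cube" using gc unfolding unit_cube_def by (rule integrable_continuous)
  have e1nn: "0 \<le> e1_unif G" unfolding e1 using gd_props(3)[OF finG neG]
    by (intro integral_nonneg[OF gint]) auto
  define S where "S = {C. \<forall>N (xi :: nat \<Rightarrow> real^'n) f. N \<ge> 1 \<longrightarrow> (\<forall>i<N. xi i \<in> unit_cube) \<longrightarrow>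
              continuous_on unit_cube f \<longrightarrow>
              \<bar>integral unit_cube f - (1 / real N) * (\<Sum>i<N. f (xi i))\<bar>
                \<le> C * modulus f (star_discrepancy N xi powr (1 / real CARD('n)))}"
  have Cd: "Cd TYPE('n) = Inf S" unfolding Cd_def S_def ..
  have Sne: "(2 + 8 ^ CARD('n)) \<in> S" unfolding S_def using koksma by blast
  have lb: "e1_unif G / \<delta> \<le> C" if C: "C \<in> S" for C
  proof -
    have C0: "C \<ge> 0" by (rule Cset_nonneg) (use C in \<open>simp add: S_def\<close>)
    have "\<bar>integral unit_cube (gd G) - (1 / real N) * (\<Sum>i<N. gd G (xi i))\<bar> \<le> C * modulus (gd G) \<delta>"
      using C N xi gc unfolding S_def \<delta>_def D_def by blast
    then have "e1_unif G \<le> C * modulus (gd G) \<delta>" unfolding avg0 e1 by simp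
    also have "\<dots> \<le> C * \<delta>"
      using C0 mod_le_lip[of "gd G" \<delta>] gd_lip[OF finG neG] \<delta>0 by (intro mult_left_mono) auto
    finally show ?thesis using \<delta>0 by (simp add: divide_le_eq)
  qed
  have "e1_unif G / \<delta> \<le> Inf S" by (rule cInf_greatest) (use Sne lb in auto)
  then have partA: "e1_unif G \<le> Cd TYPE('n) * \<delta>" unfolding Cd using \<delta>0 by (simp add: divide_le_eq)
  have partB: "e1_unif G \<le> D" if d1: "CARD('n) = 1"
  proof -
    obtain a :: 'n where "True" by simp
    have allA: "i = a" for i :: 'n using d1 by (metis card_1_singletonE UNIV_I singletonD)
    have pt: "gd G u \<le> D" if u: "u \<in> unit_cube" for u
    proof -
      have "\<exists>p<N. \<bar>u $ a - xi p $ a\<bar> \<le> D"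
      proof (rule one_dim_point[OF N])
        show "0 \<le> xi p $ a \<and> xi p $ a \<le> 1" if "p < N" for p using xi that unfolding mem_cube by auto
        show "0 \<le> u $ a" "u $ a \<le> 1" using u unfolding mem_cube by auto
        fix t :: real assume t: "0 \<le> t" "t \<le> 1"
        define v :: "real^'n" where "v = t *\<^sub>R One"
        have v: "v \<in> unit_cube" unfolding mem_cube v_def using t by simp
        have "{p\<in>{..<N}. xi p \<in> cbox 0 v} = {p\<in>{..<N}. xi p $ a \<le> t}"
          using xi unfolding v_def mem_cube mem_box_cart by (auto simp: allA) (metis allA)
        moreover have "measure lborel (cbox 0 v) = t"
          using meas_box[OF v] unfolding v_def by (simp add: d1)
        ultimately have "Fd N xi v = \<bar>real (card {p\<in>{..<N}. xi p $ a \<le> t}) / real N - t\<bar>" unfolding Fd_def by simp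
        then show "\<bar>real (card {p\<in>{..<N}. xi p $ a \<le> t}) / real N - t\<bar> \<le> D" using Fd_upper[OF v, of N xi] unfolding D_def by simp
      qed
      then obtain p where p: "p < N" "\<bar>u $ a - xi p $ a\<bar> \<le> D" by blast
      have "linf_norm (u - xi p) \<le> D" unfolding linf_le_iff using p(2) allA by (metis vector_minus_component)
      moreover have "gd G u \<le> linf_norm (u - xi p)" by (rule gd_props(1)[OF finG neG]) (use p in \<open>simp add: G_def\<close>)
      ultimately show ?thesis by linarith
    qed
    have "norm (integral (cbox 0 One) (gd G)) \<le> D * measure lborel (cbox 0 (One :: real^'n))"
      by (rule has_integral_bound[of D]) (use D0 gint pt gd_props(3)[OF finG neG] in \<open>auto simp: unit_cube_def\<close>)
    then show ?thesis using content_cube[where 'n='n] e1nn unfolding e1 unit_cube_def by simp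
  qed
  show ?thesis using partA partB unfolding G_def D_def \<delta>_def by blast
qed


end
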